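(* Let $n$ be a perfect square and let $G^*$ be the subgraph of the square lattice $\mathbb Z^2$ induced on $\{(x,y)\in\mathbb Z^2: -\sqrt n<2x\le\sqrt n,\ -\sqrt n<2y\le\sqrt n\}$ (which has $n$ vertices). Then, as $n\to\infty$, the demand at the vertex $(0,0)$ in $G^*$ satisfies $$\tfrac14(1+o(1))\,n^{1.5}<\mathbb D((0,0))<\tfrac98(1+o(1))\,n^{1.5}.$$
   Context: The square lattice has vertex set $\mathbb Z^2$ with $(x,y)(x',y')$ an edge iff $|x-x'|+|y-y'|=1$. For a connected graph $G$ and vertices $u,v,w$, let $P(u,v)$ be the number of shortest paths from $u$ to $v$ and $P(u,v;w)$ the number of those that use $w$. The demand at $w$ is $\mathbb D(w)=\sum_{\{u,v\}}P(u,v;w)/P(u,v)$, summed over unordered pairs of distinct vertices. *)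

theory Defs
  imports Complex_Main
begin

definition is_walk :: "'a set \<Rightarrow> ('a \<Rightarrow> 'a \<Rightarrow> bool) \<Rightarrow> 'a list \<Rightarrow> bool" where
  "is_walk V E xs \<longleftrightarrow> xs \<noteq> [] \<and> set xs \<subseteq> V \<and>
     (\<forall>i. Suc i < length xs \<longrightarrow> E (xs ! i) (xs ! Suc i))"

definition walks_between :: "'a set \<Rightarrow> ('a \<Rightarrow> 'a \<Rightarrow> bool) \<Rightarrow> 'a \<Rightarrow> 'a \<Rightarrow> 'a list set" where
  "walks_between V E u v = {xs. is_walk V E xs \<and> hd xs = u \<and> last xs = v}"

text \<open>Shortest paths from u to v: walks from u to v of minimum length
  (such walks are automatically paths).\<close>
definition shortest_paths :: "'a set \<Rightarrow> ('a \<Rightarrow> 'a \<Rightarrow> bool) \<Rightarrow> 'a \<Rightarrow> 'a \<Rightarrow> 'a list set" where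
  "shortest_paths V E u v = {xs \<in> walks_between V E u v.
      \<forall>ys \<in> walks_between V E u v. length xs \<le> length ys}"

definition num_sp :: "'a set \<Rightarrow> ('a \<Rightarrow> 'a \<Rightarrow> bool) \<Rightarrow> 'a \<Rightarrow> 'a \<Rightarrow> nat" where
  "num_sp V E u v = card (shortest_paths V E u v)"

definition num_sp_through :: "'a set \<Rightarrow> ('a \<Rightarrow> 'a \<Rightarrow> bool) \<Rightarrow> 'a \<Rightarrow> 'a \<Rightarrow> 'a \<Rightarrow> nat" where
  "num_sp_through V E u v w = card {xs \<in> shortest_paths V E u v. w \<in> set xs}"

text \<open>Demand at w: sum over unordered pairs {u,v} of distinct vertices of
  P(u,v;w)/P(u,v).  An unordered pair is a 2-element subset S of V; u, v
  are its two elements.\<close>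
definition demand :: "'a set \<Rightarrow> ('a \<Rightarrow> 'a \<Rightarrow> bool) \<Rightarrow> 'a \<Rightarrow> real" where
  "demand V E w = (\<Sum>S \<in> {S. S \<subseteq> V \<and> card S = 2}.
      (let u = (SOME u. u \<in> S); v = (SOME v. v \<in> S - {u})
       in real (num_sp_through V E u v w) / real (num_sp V E u v)))"

definition lattice_adj :: "int \<times> int \<Rightarrow> int \<times> int \<Rightarrow> bool" where
  "lattice_adj p q \<longleftrightarrow> \<bar>fst p - fst q\<bar> + \<bar>snd p - snd q\<bar> = 1"

definition box_vertices :: "nat \<Rightarrow> (int \<times> int) set" where
  "box_vertices n = {(x, y). - sqrt (real n) < 2 * real_of_int x \<and> 2 * real_of_int x \<le> sqrt (real n)
                        \<and> - sqrt (real n) < 2 * real_of_int y \<and> 2 * real_of_int y \<le> sqrt (real n)}"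

end

theory Submission
  imports Defs
begin


definition d1 :: "int\<times>int \<Rightarrow> int\<times>int \<Rightarrow> int" where
  "d1 p q = \<bar>fst p - fst q\<bar> + \<bar>snd p - snd q\<bar>"

definition chain :: "(int\<times>int) list \<Rightarrow> bool" where
  "chain xs \<longleftrightarrow> (\<forall>i. Suc i < length xs \<longrightarrow> lattice_adj (xs!i) (xs!Suc i))"

lemma adj_d1: "lattice_adj p q \<longleftrightarrow> d1 p q = 1"
  by (simp add: lattice_adj_def d1_def)

lemma d1_sym: "d1 p q = d1 q p" by (simp add: d1_def abs_minus_commute)
lemma d1_tri: "d1 p r \<le> d1 p q + d1 q r" unfolding d1_def by linarith
lemma d1_nonneg: "0 \<le> d1 p q" by (simp add: d1_def)
lemma d1_0: "d1 p q = 0 \<longleftrightarrow> p = q" by (auto simp: d1_def prod_eq_iff)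
lemma d1_self[simp]: "d1 p p = 0" by (simp add: d1_def)

lemma chain_dist:
  assumes "chain xs" "i \<le> j" "j < length xs"
  shows "d1 (xs!i) (xs!j) \<le> int (j - i)"
  using assms(2,3)
proof (induction j)
  case 0 then show ?case by (simp add: d1_0)
next
  case (Suc j)
  show ?case
  proof (cases "i = Suc j")
    case True then show ?thesis by (simp add: d1_0)
  next
    case False
    then have ij: "i \<le> j" using Suc by simp
    have "d1 (xs!i) (xs!Suc j) \<le> d1 (xs!i) (xs!j) + d1 (xs!j) (xs!Suc j)" by (rule d1_tri)
    moreover have "d1 (xs!j) (xs!Suc j) = 1" using assms(1) Suc.prems unfolding chain_def adj_d1 by auto
    moreover have "d1 (xs!i) (xs!j) \<le> int (j - i)" using Suc ij by simp
    ultimately show ?thesis using ij by simp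
  qed
qed

lemma chain_Cons: "chain (u # xs) \<longleftrightarrow> chain xs \<and> (xs \<noteq> [] \<longrightarrow> lattice_adj u (hd xs))"
  unfolding chain_def
  apply (auto simp: hd_conv_nth)
  subgoal for i by (cases i) auto
  done

lemma walk_chain: "is_walk V lattice_adj xs \<longleftrightarrow> xs \<noteq> [] \<and> set xs \<subseteq> V \<and> chain xs"
  by (simp add: is_walk_def chain_def)

lemma chain_len:
  assumes "chain xs" "xs \<noteq> []"
  shows "d1 (hd xs) (last xs) \<le> int (length xs) - 1"
proof -
  have "d1 (xs!0) (xs!(length xs - 1)) \<le> int (length xs - 1 - 0)"
    using chain_dist[OF assms(1), of 0 "length xs - 1"] assms(2) by simp
  moreover have "int (length xs - 1) = int (length xs) - 1" using assms(2) by (cases xs) auto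
  ultimately show ?thesis using assms(2) by (simp add: hd_conv_nth last_conv_nth)
qed

lemma chain_exists:
  "\<And>u. d1 u v = int k \<Longrightarrow> \<exists>xs. chain xs \<and> xs \<noteq> [] \<and> hd xs = u \<and> last xs = v \<and> length xs = k + 1"
proof (induction k)
  case 0 then show ?case by (intro exI[of _ "[u]"]) (auto simp: d1_0 chain_def)
next
  case (Suc k)
  define u' where "u' = (if fst u < fst v then (fst u + 1, snd u) else if fst v < fst u then (fst u - 1, snd u)
     else if snd u < snd v then (fst u, snd u + 1) else (fst u, snd u - 1))"
  have a: "lattice_adj u u'" using Suc.prems by (auto simp: u'_def lattice_adj_def d1_def)
  have b: "d1 u' v = int k" using Suc.prems by (auto simp: u'_def d1_def)
  obtain xs where xs: "chain xs" "xs \<noteq> []" "hd xs = u'" "last xs = v" "length xs = k + 1"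
    using Suc.IH[OF b] by blast
  show ?case using xs a by (intro exI[of _ "u # xs"]) (auto simp: chain_Cons)
qed

definition MP :: "int\<times>int \<Rightarrow> int\<times>int \<Rightarrow> (int\<times>int) list set" where
  "MP u v = {xs. chain xs \<and> xs \<noteq> [] \<and> hd xs = u \<and> last xs = v \<and> int (length xs) = d1 u v + 1}"

lemma MP_nth:
  assumes "xs \<in> MP u v" "i < length xs"
  shows "d1 u (xs!i) = int i" "d1 (xs!i) v = d1 u v - int i"
proof -
  have c: "chain xs" and ne: "xs \<noteq> []" and h: "hd xs = u" and l: "last xs = v"
    and len: "int (length xs) = d1 u v + 1" using assms(1) by (auto simp: MP_def)
  have "d1 (xs!0) (xs!i) \<le> int (i - 0)" using chain_dist[OF c, of 0 i] assms(2) by simp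
  then have a: "d1 u (xs!i) \<le> int i" using h ne by (simp add: hd_conv_nth)
  have "d1 (xs!i) (xs!(length xs - 1)) \<le> int (length xs - 1 - i)"
    using chain_dist[OF c, of i "length xs - 1"] assms(2) by simp
  moreover have "int (length xs - 1 - i) = d1 u v - int i" using len assms(2) by linarith
  ultimately have b: "d1 (xs!i) v \<le> d1 u v - int i" using l ne by (simp add: last_conv_nth)
  have "d1 u v \<le> d1 u (xs!i) + d1 (xs!i) v" by (rule d1_tri)
  then show "d1 u (xs!i) = int i" "d1 (xs!i) v = d1 u v - int i" using a b by linarith+
qed

lemma MP_set:
  assumes "xs \<in> MP u v" "z \<in> set xs"
  shows "d1 u z + d1 z v = d1 u v"
proof -
  obtain i where "i < length xs" "z = xs!i" using assms(2) by (auto simp: in_set_conv_nth)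
  then show ?thesis using MP_nth[OF assms(1)] by simp
qed

lemma MP_nonempty: "MP u v \<noteq> {}"
proof -
  have "d1 u v = int (nat (d1 u v))" using d1_nonneg by simp
  from chain_exists[OF this] obtain xs where "chain xs" "xs \<noteq> []" "hd xs = u" "last xs = v"
    "length xs = nat (d1 u v) + 1" by blast
  then have "xs \<in> MP u v" using d1_nonneg[of u v] by (simp add: MP_def)
  then show ?thesis by blast
qed

lemma MP_finite: "finite (MP u v)"
proof -
  define D where "D = d1 u v"
  define A where "A = {fst u - D..fst u + D} \<times> {snd u - D..snd u + D}"
  have "MP u v \<subseteq> {xs. set xs \<subseteq> A \<and> length xs = nat D + 1}"
  proof
    fix xs assume xs: "xs \<in> MP u v"
    have "set xs \<subseteq> A"
    proof
      fix z assume "z \<in> set xs"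
      then have "d1 u z + d1 z v = D" using MP_set[OF xs] D_def by simp
      then have "d1 u z \<le> D" using d1_nonneg[of z v] by linarith
      then show "z \<in> A" unfolding A_def d1_def by (cases z) auto
    qed
    moreover have "length xs = nat D + 1"
    proof -
      have l: "int (length xs) = D + 1" using xs by (simp add: MP_def D_def)
      have "length xs = nat (D + 1)" using l by (metis nat_int)
      also have "\<dots> = nat D + 1" using d1_nonneg[of u v] D_def by (simp add: nat_add_distrib)
      finally show ?thesis .
    qed
    ultimately show "xs \<in> {xs. set xs \<subseteq> A \<and> length xs = nat D + 1}" by simp
  qed
  moreover have "finite {xs. set xs \<subseteq> A \<and> length xs = nat D + 1}"
    by (rule finite_lists_length_eq) (simp add: A_def)
  ultimately show ?thesis by (rule finite_subset)
qed

lemma MP_card_pos: "0 < card (MP u v)"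
  using MP_finite MP_nonempty by (simp add: card_gt_0_iff)

definition box :: "int \<Rightarrow> int \<Rightarrow> int \<Rightarrow> int \<Rightarrow> (int\<times>int) set" where
  "box L1 H1 L2 H2 = {L1..H1} \<times> {L2..H2}"

lemma between_box:
  assumes "u \<in> box L1 H1 L2 H2" "v \<in> box L1 H1 L2 H2" "d1 u z + d1 z v = d1 u v"
  shows "z \<in> box L1 H1 L2 H2"
  using assms unfolding box_def d1_def by (cases u; cases v; cases z) (auto simp: abs_if split: if_splits)

lemma SP_eq:
  assumes "u \<in> box L1 H1 L2 H2" "v \<in> box L1 H1 L2 H2"
  shows "shortest_paths (box L1 H1 L2 H2) lattice_adj u v = MP u v"
proof -
  let ?B = "box L1 H1 L2 H2"
  have lenlow: "d1 u v + 1 \<le> int (length ys)" if "ys \<in> walks_between ?B lattice_adj u v" for ys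
    using that chain_len[of ys] by (auto simp: walks_between_def walk_chain)
  have MPw: "xs \<in> walks_between ?B lattice_adj u v" if "xs \<in> MP u v" for xs
  proof -
    have "set xs \<subseteq> ?B"
    proof
      fix z assume "z \<in> set xs"
      then show "z \<in> ?B" using between_box[OF assms MP_set[OF that]] by simp
    qed
    then show ?thesis using that by (auto simp: MP_def walks_between_def walk_chain)
  qed
  obtain x0 where x0: "x0 \<in> MP u v" using MP_nonempty by blast
  show ?thesis
  proof
    show "shortest_paths ?B lattice_adj u v \<subseteq> MP u v"
    proof
      fix xs assume "xs \<in> shortest_paths ?B lattice_adj u v"
      then have w: "xs \<in> walks_between ?B lattice_adj u v" and
        m: "length xs \<le> length x0" using MPw[OF x0] by (auto simp: shortest_paths_def)
      have "int (length x0) = d1 u v + 1" using x0 by (simp add: MP_def)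
      then have "int (length xs) = d1 u v + 1" using lenlow[OF w] m by linarith
      then show "xs \<in> MP u v" using w by (auto simp: walks_between_def walk_chain MP_def)
    qed
  next
    show "MP u v \<subseteq> shortest_paths ?B lattice_adj u v"
    proof
      fix xs assume xs: "xs \<in> MP u v"
      have "length xs \<le> length ys" if "ys \<in> walks_between ?B lattice_adj u v" for ys
        using lenlow[OF that] xs by (simp add: MP_def)
      then show "xs \<in> shortest_paths ?B lattice_adj u v" using MPw[OF xs] by (simp add: shortest_paths_def)
    qed
  qed
qed



definition R :: "int\<times>int \<Rightarrow> int\<times>int \<Rightarrow> int\<times>int \<Rightarrow> real" where
  "R u v w = real (card {xs \<in> MP u v. w \<in> set xs}) / real (card (MP u v))"

lemma R_nonneg: "0 \<le> R u v w" by (simp add: R_def)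

lemma R_zero: assumes "d1 u w + d1 w v \<noteq> d1 u v" shows "R u v w = 0"
proof -
  have e: "{xs \<in> MP u v. w \<in> set xs} = {}" using MP_set assms by blast
  show ?thesis unfolding R_def e by simp
qed

lemma chain_map:
  assumes "\<And>a b. d1 (\<phi> a) (\<phi> b) = d1 a b"
  shows "chain (map \<phi> xs) \<longleftrightarrow> chain xs"
  using assms by (simp add: chain_def adj_d1)

lemma MP_map:
  assumes d: "\<And>a b. d1 (\<phi> a) (\<phi> b) = d1 a b" and i1: "\<And>a. \<psi> (\<phi> a) = a" and i2: "\<And>a. \<phi> (\<psi> a) = a"
  shows "MP (\<phi> u) (\<phi> v) = map \<phi> ` MP u v"
proof
  have cm: "chain (map \<phi> xs) = chain xs" for xs by (rule chain_map) (rule d)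
  show "map \<phi> ` MP u v \<subseteq> MP (\<phi> u) (\<phi> v)"
    using d by (auto simp: MP_def cm hd_map last_map)
next
  have d': "d1 (\<psi> a) (\<psi> b) = d1 a b" for a b using d[of "\<psi> a" "\<psi> b"] i2 by simp
  show "MP (\<phi> u) (\<phi> v) \<subseteq> map \<phi> ` MP u v"
  proof
    fix ys assume ys: "ys \<in> MP (\<phi> u) (\<phi> v)"
    have cm': "chain (map \<psi> xs) = chain xs" for xs by (rule chain_map) (rule d')
    have "map \<psi> ys \<in> MP u v" using ys d' d i1 by (auto simp: MP_def cm' hd_map last_map)
    moreover have "ys = map \<phi> (map \<psi> ys)" using i2 by (simp add: map_idI)
    ultimately show "ys \<in> map \<phi> ` MP u v" by blast
  qed
qed

lemma R_map:
  assumes d: "\<And>a b. d1 (\<phi> a) (\<phi> b) = d1 a b" and i1: "\<And>a. \<psi> (\<phi> a) = a" and i2: "\<And>a. \<phi> (\<psi> a) = a"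
  shows "R (\<phi> u) (\<phi> v) (\<phi> w) = R u v w"
proof -
  have inj: "inj (map \<phi>)" by (rule injI) (metis i1 list.map_comp list.map_id0 comp_apply id_apply map_idI)
  have injp: "inj \<phi>" by (metis i1 injI)
  have e1: "{ys \<in> MP (\<phi> u) (\<phi> v). \<phi> w \<in> set ys} = map \<phi> ` {xs \<in> MP u v. w \<in> set xs}"
    unfolding MP_map[OF assms] using injp by (auto simp: inj_image_mem_iff)
  show ?thesis unfolding R_def e1
    by (simp add: MP_map[OF assms] card_image inj_on_subset[OF inj])
qed

lemma chain_rev: assumes "chain xs" shows "chain (rev xs)"
  unfolding chain_def
proof (intro allI impI)
  fix i assume i: "Suc i < length (rev xs)"
  let ?n = "length xs"
  have a: "rev xs ! i = xs ! (?n - Suc i)" "rev xs ! Suc i = xs ! (?n - Suc (Suc i))"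
    using i by (auto simp: rev_nth)
  have "lattice_adj (xs ! (?n - Suc (Suc i))) (xs ! Suc (?n - Suc (Suc i)))"
    using assms i unfolding chain_def by auto
  moreover have "Suc (?n - Suc (Suc i)) = ?n - Suc i" using i by simp
  ultimately show "lattice_adj (rev xs ! i) (rev xs ! Suc i)" unfolding a
    by (simp add: lattice_adj_def abs_minus_commute add.commute)
qed

lemma MP_rev1: "rev ` MP u v \<subseteq> MP v u"
  by (auto simp: MP_def chain_rev hd_rev last_rev d1_sym)

lemma MP_rev: "MP v u = rev ` MP u v"
proof
  show "MP v u \<subseteq> rev ` MP u v"
  proof
    fix ys assume "ys \<in> MP v u"
    then have "rev ys \<in> MP u v" using MP_rev1[of v u] by blast
    then show "ys \<in> rev ` MP u v" by (metis rev_rev_ident imageI)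
  qed
qed (rule MP_rev1)

lemma R_sym: "R v u w = R u v w"
proof -
  have e1: "{ys \<in> MP v u. w \<in> set ys} = rev ` {xs \<in> MP u v. w \<in> set xs}"
    unfolding MP_rev[of v u] by auto
  show ?thesis unfolding R_def e1
    by (simp add: MP_rev[of v u] card_image)
qed

definition tr :: "int\<times>int \<Rightarrow> int\<times>int \<Rightarrow> int\<times>int" where
  "tr t p = (fst p + fst t, snd p + snd t)"

lemma R_tr: "R (tr t u) (tr t v) (tr t w) = R u v w"
  by (rule R_map[where \<psi> = "tr (- fst t, - snd t)"]) (auto simp: tr_def d1_def)

definition reflx :: "int\<times>int \<Rightarrow> int\<times>int" where
  "reflx p = (- fst p, snd p)"

lemma R_refl: "R (reflx u) (reflx v) (reflx w) = R u v w"
  by (rule R_map[where \<psi> = "reflx"]) (auto simp: reflx_def d1_def abs_minus_commute)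

definition Lev :: "int\<times>int \<Rightarrow> int\<times>int \<Rightarrow> int \<Rightarrow> (int\<times>int) set" where
  "Lev u v k = {w. fst u \<le> fst w \<and> fst w \<le> fst v \<and> snd u \<le> snd w \<and> snd w \<le> snd v
       \<and> (fst w - fst u) + (snd w - snd u) = k}"

lemma between_ne:
  assumes "fst u \<le> fst v" "snd u \<le> snd v" "d1 u z + d1 z v = d1 u v"
  shows "fst u \<le> fst z \<and> fst z \<le> fst v \<and> snd u \<le> snd z \<and> snd z \<le> snd v"
proof -
  have a: "\<bar>fst u - fst z\<bar> + \<bar>fst z - fst v\<bar> \<ge> fst v - fst u" by linarith
  have b: "\<bar>snd u - snd z\<bar> + \<bar>snd z - snd v\<bar> \<ge> snd v - snd u" by linarith
  have c: "\<bar>fst u - fst z\<bar> + \<bar>fst z - fst v\<bar> + (\<bar>snd u - snd z\<bar> + \<bar>snd z - snd v\<bar>)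
      = (fst v - fst u) + (snd v - snd u)" using assms unfolding d1_def by linarith
  have e1: "\<bar>fst u - fst z\<bar> + \<bar>fst z - fst v\<bar> = fst v - fst u" using a b c by linarith
  have e2: "\<bar>snd u - snd z\<bar> + \<bar>snd z - snd v\<bar> = snd v - snd u" using a b c by linarith
  show ?thesis using e1 e2 by linarith
qed

lemma Lev_finite: "finite (Lev u v k)"
  by (rule finite_subset[of _ "{fst u..fst v} \<times> {snd u..snd v}"]) (auto simp: Lev_def)

lemma Lev_sum:
  assumes uv: "fst u \<le> fst v" "snd u \<le> snd v" and k: "0 \<le> k" "k \<le> d1 u v"
  shows "(\<Sum>w\<in>Lev u v k. R u v w) = 1"
proof -
  let ?M = "MP u v"
  have img: "(\<lambda>xs. xs ! nat k) ` ?M \<subseteq> Lev u v k"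
  proof
    fix z assume "z \<in> (\<lambda>xs. xs ! nat k) ` ?M"
    then obtain xs where xs: "xs \<in> ?M" and z: "z = xs ! nat k" by blast
    have "int (length xs) = d1 u v + 1" using xs by (simp add: MP_def)
    then have lt: "nat k < length xs" using k by linarith
    have "d1 u z = k" "d1 z v = d1 u v - k" using MP_nth[OF xs lt] z k by auto
    then have "d1 u z + d1 z v = d1 u v" by simp
    then have "fst u \<le> fst z \<and> fst z \<le> fst v \<and> snd u \<le> snd z \<and> snd z \<le> snd v"
      by (rule between_ne[OF uv])
    moreover have "(fst z - fst u) + (snd z - snd u) = k" using \<open>d1 u z = k\<close> calculation
      by (simp add: d1_def)
    ultimately show "z \<in> Lev u v k" unfolding Lev_def by simp
  qed
  have eqset: "{xs \<in> ?M. w \<in> set xs} = {xs \<in> ?M. xs ! nat k = w}" if w: "w \<in> Lev u v k" for w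
  proof -
    have "fst u \<le> fst w" "snd u \<le> snd w" "(fst w - fst u)+(snd w - snd u) = k" using w by (auto simp: Lev_def)
    then have "d1 u w = k" by (simp add: d1_def)
    have "w \<in> set xs \<longleftrightarrow> xs ! nat k = w" if xs: "xs \<in> ?M" for xs
    proof
      assume "w \<in> set xs"
      then obtain i where i: "i < length xs" "w = xs ! i" by (auto simp: in_set_conv_nth)
      then have "int i = k" using MP_nth(1)[OF xs i(1)] \<open>d1 u w = k\<close> by simp
      then show "xs ! nat k = w" using i by auto
    next
      assume "xs ! nat k = w"
      have "int (length xs) = d1 u v + 1" using xs by (simp add: MP_def)
      then have lt: "nat k < length xs" using k by linarith
      then show "w \<in> set xs" using \<open>xs ! nat k = w\<close> nth_mem by blast
    qed
    then show ?thesis by blast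
  qed
  have "(\<Sum>w\<in>Lev u v k. card {xs \<in> ?M. xs ! nat k = w}) = card ?M"
    using sum.group[OF MP_finite Lev_finite img, of "\<lambda>_. 1::nat"] by simp
  then have "(\<Sum>w\<in>Lev u v k. card {xs \<in> ?M. w \<in> set xs}) = card ?M"
    using eqset by (simp cong: sum.cong)
  then have "real (\<Sum>w\<in>Lev u v k. card {xs \<in> ?M. w \<in> set xs}) = real (card ?M)"
    by simp
  then have "(\<Sum>w\<in>Lev u v k. real (card {xs \<in> ?M. w \<in> set xs})) = real (card ?M)"
    by simp
  then show ?thesis using MP_card_pos[of u v] unfolding R_def
    by (simp add: sum_divide_distrib[symmetric])
qed



definition NE :: "(int\<times>int) set \<Rightarrow> ((int\<times>int)\<times>(int\<times>int)) set" where
  "NE B = {p \<in> B \<times> B. fst (fst p) \<le> fst (snd p) \<and> snd (fst p) \<le> snd (snd p)}"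

lemma box_finite: "finite (box L1 H1 L2 H2)" by (simp add: box_def)

lemma NE_finite: "finite (NE (box L1 H1 L2 H2))"
  by (rule finite_subset[of _ "box L1 H1 L2 H2 \<times> box L1 H1 L2 H2"]) (auto simp: NE_def box_finite)

definition kap :: "(int\<times>int)\<times>(int\<times>int) \<Rightarrow> (int\<times>int)\<times>int" where
  "kap p = ((fst (snd p) - fst (fst p), snd (snd p) - snd (fst p)), fst (fst p) + snd (fst p))"

definition sh :: "(int\<times>int)\<times>(int\<times>int) \<Rightarrow> (int\<times>int)\<times>(int\<times>int)" where
  "sh p = ((fst (fst p) - 1, snd (fst p) + 1), (fst (snd p) - 1, snd (snd p) + 1))"

lemma kap_sh: "kap (sh p) = kap p" by (simp add: kap_def sh_def)

lemma fiber_le1: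
  assumes Q: "\<And>p. p \<in> Q \<Longrightarrow> fst (fst p) \<le> 0 \<and> snd (fst p) \<le> 0 \<and> 0 \<le> fst (snd p) \<and> 0 \<le> snd (snd p)"
    and fin: "finite Q"
  shows "(\<Sum>p\<in>{p \<in> Q. kap p = k}. R (fst p) (snd p) (0,0)) \<le> 1"
proof (cases "{p \<in> Q. kap p = k} = {}")
  case True then show ?thesis by (metis sum.empty zero_le_one)
next
  case False
  obtain a b s where k: "k = ((a,b),s)" by (metis prod.collapse)
  let ?F = "{p \<in> Q. kap p = k}"
  define g where "g p = (- fst (fst p), - snd (fst p))" for p :: "(int\<times>int)\<times>(int\<times>int)"
  obtain p0 where p0: "p0 \<in> Q" "kap p0 = k" using False by blast
  have ab: "0 \<le> a" "0 \<le> b" "0 \<le> - s" "- s \<le> a + b"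
    using Q[OF p0(1)] p0(2) k by (auto simp: kap_def)
  have inj: "inj_on g ?F"
  proof (rule inj_onI)
    fix p q assume "p \<in> ?F" "q \<in> ?F" "g p = g q"
    then show "p = q" using k by (auto simp: g_def kap_def prod_eq_iff)
  qed
  have sub: "g ` ?F \<subseteq> Lev (0,0) (a,b) (- s)"
  proof
    fix w assume "w \<in> g ` ?F"
    then obtain p where p: "p \<in> Q" "kap p = k" "w = g p" by blast
    then show "w \<in> Lev (0,0) (a,b) (- s)" using Q[OF p(1)] k by (auto simp: g_def kap_def Lev_def)
  qed
  have Rv: "R (fst p) (snd p) (0,0) = R (0,0) (a,b) (g p)" if "p \<in> ?F" for p
  proof -
    have "R (fst p) (snd p) (0,0) = R (tr (g p) (fst p)) (tr (g p) (snd p)) (tr (g p) (0,0))"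
      by (rule R_tr[symmetric])
    moreover have "tr (g p) (fst p) = (0,0)" "tr (g p) (snd p) = (a,b)" "tr (g p) (0,0) = g p"
      using that k by (auto simp: tr_def g_def kap_def)
    ultimately show ?thesis by simp
  qed
  have "(\<Sum>p\<in>?F. R (fst p) (snd p) (0,0)) = (\<Sum>p\<in>?F. R (0,0) (a,b) (g p))"
    using Rv by (rule sum.cong[OF refl])
  also have "\<dots> = (\<Sum>w\<in>g ` ?F. R (0,0) (a,b) w)" by (simp add: sum.reindex[OF inj] comp_def)
  also have "\<dots> \<le> (\<Sum>w\<in>Lev (0,0) (a,b) (- s). R (0,0) (a,b) w)"
    by (rule sum_mono2[OF Lev_finite sub]) (simp add: R_nonneg)
  also have "\<dots> = 1" by (rule Lev_sum) (use ab in \<open>auto simp: d1_def\<close>)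
  finally show ?thesis .
qed

lemma card_int_range: "card {l..u::int} = nat (u - l + 1)" by simp

lemma NE_upper:
  assumes L: "L1 \<le> 0" "0 \<le> H1" "L2 \<le> 0" "0 \<le> H2"
    and F: "nat (1 - L1) \<le> F" "nat (1 + H1) \<le> F" "nat (1 - L2) \<le> F" "nat (1 + H2) \<le> F"
  shows "(\<Sum>p\<in>NE (box L1 H1 L2 H2). R (fst p) (snd p) (0,0)) \<le> 4 * real F ^ 3"
proof -
  let ?B = "box L1 H1 L2 H2"
  define Q where "Q = {p \<in> NE ?B. fst (fst p) \<le> 0 \<and> snd (fst p) \<le> 0 \<and> 0 \<le> fst (snd p) \<and> 0 \<le> snd (snd p)}"
  have finQ: "finite Q" unfolding Q_def using NE_finite by simp
  have QQ: "\<And>p. p \<in> Q \<Longrightarrow> fst (fst p) \<le> 0 \<and> snd (fst p) \<le> 0 \<and> 0 \<le> fst (snd p) \<and> 0 \<le> snd (snd p)"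
    by (simp add: Q_def)
  have s1: "(\<Sum>p\<in>NE ?B. R (fst p) (snd p) (0,0)) = (\<Sum>p\<in>Q. R (fst p) (snd p) (0,0))"
  proof (rule sum.mono_neutral_right[OF NE_finite])
    show "Q \<subseteq> NE ?B" by (auto simp: Q_def)
    show "\<forall>p\<in>NE ?B - Q. R (fst p) (snd p) (0,0) = 0"
    proof
      fix p assume p: "p \<in> NE ?B - Q"
      show "R (fst p) (snd p) (0,0) = 0"
      proof (rule R_zero, rule notI)
        assume "d1 (fst p) (0,0) + d1 (0,0) (snd p) = d1 (fst p) (snd p)"
        from between_ne[OF _ _ this] p show False by (auto simp: NE_def Q_def)
      qed
    qed
  qed
  have s2: "(\<Sum>p\<in>Q. R (fst p) (snd p) (0,0)) = (\<Sum>k\<in>kap ` Q. \<Sum>p\<in>{p \<in> Q. kap p = k}. R (fst p) (snd p) (0,0))"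
    by (rule sum.group[symmetric]) (auto simp: finQ)
  have s3: "\<dots> \<le> (\<Sum>k\<in>kap ` Q. 1)"
    by (rule sum_mono) (rule fiber_le1[OF QQ finQ])
  define Qc where "Qc = {p \<in> Q. sh p \<notin> Q}"
  have s4: "kap ` Q \<subseteq> kap ` Qc"
  proof
    fix k assume "k \<in> kap ` Q"
    then obtain p where p: "p \<in> Q" "kap p = k" by blast
    define P where "P q = (q \<in> Q \<and> kap q = k)" for q
    have "P p" using p by (simp add: P_def)
    from ex_has_least_nat[of P p "\<lambda>q. nat (fst (fst q) - L1)", OF this]
    obtain q where q: "P q" and qmin: "\<And>r. P r \<Longrightarrow> nat (fst (fst q) - L1) \<le> nat (fst (fst r) - L1)"
      by blast
    have "sh q \<notin> Q"
    proof
      assume sq: "sh q \<in> Q"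
      then have "P (sh q)" using q kap_sh by (simp add: P_def)
      from qmin[OF this] have "nat (fst (fst q) - L1) \<le> nat (fst (fst q) - 1 - L1)" by (simp add: sh_def)
      moreover have "L1 \<le> fst (fst q) - 1" using sq by (auto simp: Q_def NE_def box_def sh_def)
      ultimately show False by linarith
    qed
    then have "q \<in> Qc" using q by (simp add: Qc_def P_def)
    then show "k \<in> kap ` Qc" using q by (auto simp: P_def)
  qed
  define A1 where "A1 = (\<lambda>(y1,x2,y2). ((L1,y1),(x2,y2))) ` ({L2..0::int}\<times>{0..H1::int}\<times>{0..H2::int})"
  define A2 where "A2 = (\<lambda>(x1,y1,x2). ((x1,y1),(x2,H2))) ` ({L1..0::int}\<times>{L2..0::int}\<times>{0..H1::int})"
  define A3 where "A3 = (\<lambda>(x1,x2,y2). ((x1,0::int),(x2,y2))) ` ({L1..0::int}\<times>{0..H1::int}\<times>{0..H2::int})"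
  define A4 where "A4 = (\<lambda>(x1,y1,y2). ((x1,y1),(0::int,y2))) ` ({L1..0::int}\<times>{L2..0::int}\<times>{0..H2::int})"
  have s5: "Qc \<subseteq> A1 \<union> A2 \<union> A3 \<union> A4"
  proof
    fix p assume p: "p \<in> Qc"
    obtain x1 y1 x2 y2 where pe: "p = ((x1,y1),(x2,y2))" by (metis prod.collapse)
    have inQ: "L1 \<le> x1" "x1 \<le> 0" "L2 \<le> y1" "y1 \<le> 0" "0 \<le> x2" "x2 \<le> H1" "0 \<le> y2" "y2 \<le> H2"
      using p by (auto simp: Qc_def Q_def NE_def box_def pe)
    have "x1 \<le> x2" "y1 \<le> y2" using p by (auto simp: Qc_def Q_def NE_def pe)
    have nq: "\<not> (L1 \<le> x1 - 1 \<and> y1 + 1 \<le> H2 \<and> y2 + 1 \<le> H2 \<and> y1 + 1 \<le> 0 \<and> 0 \<le> x2 - 1)"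
    proof
      assume c: "L1 \<le> x1 - 1 \<and> y1 + 1 \<le> H2 \<and> y2 + 1 \<le> H2 \<and> y1 + 1 \<le> 0 \<and> 0 \<le> x2 - 1"
      have "sh p \<in> Q" unfolding pe Q_def NE_def box_def sh_def
        using c inQ \<open>x1 \<le> x2\<close> \<open>y1 \<le> y2\<close> by simp
      then show False using p by (simp add: Qc_def)
    qed
    then have "x1 = L1 \<or> y2 = H2 \<or> y1 = 0 \<or> x2 = 0" using inQ by linarith
    then show "p \<in> A1 \<union> A2 \<union> A3 \<union> A4"
    proof (elim disjE)
      assume "x1 = L1" then have "p = (\<lambda>(y1,x2,y2). ((L1,y1),(x2,y2))) (y1,x2,y2)" by (simp add: pe)
      then have "p \<in> A1" using inQ unfolding A1_def by (intro image_eqI[of _ _ "(y1,x2,y2)"]) auto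
      then show ?thesis by blast
    next
      assume "y2 = H2" then have "p = (\<lambda>(x1,y1,x2). ((x1,y1),(x2,H2))) (x1,y1,x2)" by (simp add: pe)
      then have "p \<in> A2" using inQ unfolding A2_def by (intro image_eqI[of _ _ "(x1,y1,x2)"]) auto
      then show ?thesis by blast
    next
      assume "y1 = 0" then have "p = (\<lambda>(x1,x2,y2). ((x1,0::int),(x2,y2))) (x1,x2,y2)" by (simp add: pe)
      then have "p \<in> A3" using inQ unfolding A3_def by (intro image_eqI[of _ _ "(x1,x2,y2)"]) auto
      then show ?thesis by blast
    next
      assume "x2 = 0" then have "p = (\<lambda>(x1,y1,y2). ((x1,y1),(0::int,y2))) (x1,y1,y2)" by (simp add: pe)
      then have "p \<in> A4" using inQ unfolding A4_def by (intro image_eqI[of _ _ "(x1,y1,y2)"]) auto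
      then show ?thesis by blast
    qed
  qed
  have F': "nat (1 - L1) \<le> F" "nat (H1 + 1) \<le> F" "nat (1 - L2) \<le> F" "nat (H2 + 1) \<le> F"
    "nat (0 - L1 + 1) \<le> F" "nat (0 - L2 + 1) \<le> F" "nat (H1 - 0 + 1) \<le> F" "nat (H2 - 0 + 1) \<le> F"
    using F by (simp_all add: add.commute)
  have F3: "a * (b * c) \<le> F ^ 3" if "a \<le> F" "b \<le> F" "c \<le> F" for a b c :: nat
  proof -
    have "a * (b * c) \<le> F * (F * F)" using that by (intro mult_le_mono) auto
    then show ?thesis by (simp add: power3_eq_cube)
  qed
  have c1: "card A1 \<le> F ^ 3"
    unfolding A1_def by (rule le_trans[OF card_image_le]) (simp_all only: card_cartesian_product card_int_range F3 F' finite_cartesian_product finite_atLeastAtMost_int)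
  have c2: "card A2 \<le> F ^ 3"
    unfolding A2_def by (rule le_trans[OF card_image_le]) (simp_all only: card_cartesian_product card_int_range F3 F' finite_cartesian_product finite_atLeastAtMost_int)
  have c3: "card A3 \<le> F ^ 3"
    unfolding A3_def by (rule le_trans[OF card_image_le]) (simp_all only: card_cartesian_product card_int_range F3 F' finite_cartesian_product finite_atLeastAtMost_int)
  have c4: "card A4 \<le> F ^ 3"
    unfolding A4_def by (rule le_trans[OF card_image_le]) (simp_all only: card_cartesian_product card_int_range F3 F' finite_cartesian_product finite_atLeastAtMost_int)
  have finA: "finite A1" "finite A2" "finite A3" "finite A4" by (auto simp: A1_def A2_def A3_def A4_def)
  have "card (kap ` Q) \<le> card (kap ` Qc)" by (rule card_mono) (use s4 finQ in \<open>auto simp: Qc_def\<close>)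
  also have "\<dots> \<le> card Qc" by (rule card_image_le) (use finQ in \<open>simp add: Qc_def\<close>)
  also have "\<dots> \<le> card (A1 \<union> A2 \<union> A3 \<union> A4)" by (rule card_mono) (use finA s5 in auto)
  also have "\<dots> \<le> card A1 + card A2 + card A3 + card A4"
    using card_Un_le[of "A1\<union>A2\<union>A3" A4] card_Un_le[of "A1\<union>A2" A3] card_Un_le[of A1 A2] by linarith
  also have "\<dots> \<le> 4 * F ^ 3" using c1 c2 c3 c4 by linarith
  finally have cnt: "card (kap ` Q) \<le> 4 * F ^ 3" .
  have "(\<Sum>p\<in>NE ?B. R (fst p) (snd p) (0,0)) \<le> real (card (kap ` Q))"
    using s1 s2 s3 by simp
  also have "\<dots> \<le> real (4 * F ^ 3)" using cnt by linarith
  finally show ?thesis by simp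
qed



definition NEs :: "(int\<times>int) set \<Rightarrow> ((int\<times>int)\<times>(int\<times>int)) set" where
  "NEs B = {p \<in> B \<times> B. fst (fst p) < fst (snd p) \<and> snd (fst p) < snd (snd p)}"

lemma NEs_finite: "finite (NEs (box L1 H1 L2 H2))"
  by (rule finite_subset[of _ "box L1 H1 L2 H2 \<times> box L1 H1 L2 H2"]) (auto simp: NEs_def box_finite)

lemma cube_count:
  fixes M :: nat
  defines "S \<equiv> {1..int M} \<times> {1..int M}"
  shows "real M ^ 3 \<le> (\<Sum>d\<in>S. real_of_int (fst d + snd d + 1))"
proof -
  define \<sigma> where "\<sigma> d = (int M + 1 - fst d, int M + 1 - snd d)" for d :: "int\<times>int"
  define f where "f d = real_of_int (fst d + snd d + 1)" for d :: "int\<times>int"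
  have inj: "inj_on \<sigma> S" by (rule inj_onI) (auto simp: \<sigma>_def prod_eq_iff)
  have img: "\<sigma> ` S = S"
  proof
    show "\<sigma> ` S \<subseteq> S" by (auto simp: \<sigma>_def S_def)
    show "S \<subseteq> \<sigma> ` S"
    proof
      fix d assume "d \<in> S"
      then have "\<sigma> d \<in> S" "\<sigma> (\<sigma> d) = d" by (auto simp: \<sigma>_def S_def)
      then show "d \<in> \<sigma> ` S" by (metis imageI)
    qed
  qed
  have "(\<Sum>d\<in>S. f d) = (\<Sum>d\<in>\<sigma> ` S. f d)" using img by simp
  also have "\<dots> = (\<Sum>d\<in>S. f (\<sigma> d))" by (simp add: sum.reindex[OF inj])
  finally have e: "(\<Sum>d\<in>S. f d) = (\<Sum>d\<in>S. f (\<sigma> d))" .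
  have "2 * (\<Sum>d\<in>S. f d) = (\<Sum>d\<in>S. f d + f (\<sigma> d))" using e by (simp add: sum.distrib)
  also have "\<dots> = (\<Sum>d\<in>S. 2 * real M + 4)" by (rule sum.cong) (auto simp: f_def \<sigma>_def)
  also have "\<dots> = (2 * real M + 4) * real M ^ 2" by (simp add: S_def card_cartesian_product power2_eq_square)
  finally have "(\<Sum>d\<in>S. f d) = (real M + 2) * real M ^ 2" by (simp add: algebra_simps)
  moreover have "real M ^ 3 \<le> (real M + 2) * real M ^ 2"
  proof -
    have "real M * real M ^ 2 \<le> (real M + 2) * real M ^ 2" by (intro mult_right_mono) auto
    then show ?thesis by (simp add: power3_eq_cube power2_eq_square)
  qed
  ultimately show ?thesis by (simp add: f_def)
qed

lemma NE_lower:
  fixes M :: nat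
  assumes L: "L1 \<le> - int M" "int M \<le> H1" "L2 \<le> - int M" "int M \<le> H2"
  shows "real M ^ 3 \<le> (\<Sum>p\<in>NEs (box L1 H1 L2 H2). R (fst p) (snd p) (0,0))"
proof -
  let ?B = "box L1 H1 L2 H2"
  define S where "S = {1..int M} \<times> {1..int M}"
  define K where "K = Sigma S (\<lambda>d. {-(fst d + snd d)..0})"
  define h where "h k w = ((- fst w, - snd w), (fst (fst k) - fst w, snd (fst k) - snd w))"
    for k :: "(int\<times>int)\<times>int" and w :: "int\<times>int"
  define Fib where "Fib k = h k ` Lev (0,0) (fst k) (- snd k)" for k
  have finK: "finite K" by (auto simp: K_def S_def)
  have finF: "finite (Fib k)" for k by (simp add: Fib_def Lev_finite)
  have sub: "Fib k \<subseteq> NEs ?B" if k: "k \<in> K" for k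
  proof
    fix p assume "p \<in> Fib k"
    then obtain w where w: "w \<in> Lev (0,0) (fst k) (- snd k)" "p = h k w" by (auto simp: Fib_def)
    obtain a b s where ke: "k = ((a,b),s)" by (metis prod.collapse)
    obtain w1 w2 where we: "w = (w1,w2)" by (metis prod.collapse)
    have ab: "1 \<le> a" "a \<le> int M" "1 \<le> b" "b \<le> int M"
      using k by (auto simp: K_def S_def ke)
    have ww: "0 \<le> w1" "w1 \<le> a" "0 \<le> w2" "w2 \<le> b" using w(1) by (auto simp: Lev_def ke we)
    have pe: "p = ((- w1, - w2), (a - w1, b - w2))" using w(2) by (simp add: h_def ke we)
    show "p \<in> NEs ?B" unfolding pe NEs_def box_def using ab ww L by simp
  qed
  have disj: "Fib k \<inter> Fib k' = {}" if "k \<in> K" "k' \<in> K" "k \<noteq> k'" for k k'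
  proof (rule ccontr)
    assume "Fib k \<inter> Fib k' \<noteq> {}"
    then obtain p where "p \<in> Fib k" "p \<in> Fib k'" by blast
    then obtain w w' where w: "w \<in> Lev (0,0) (fst k) (- snd k)" "w' \<in> Lev (0,0) (fst k') (- snd k')"
      "p = h k w" "p = h k' w'" unfolding Fib_def by blast
    then have hh: "h k w = h k' w'" by simp
    have e1: "w = w'" using hh by (simp add: h_def prod_eq_iff)
    then have e2: "fst k = fst k'" using hh by (simp add: h_def prod_eq_iff)
    have "snd k = snd k'" using w(1,2) e1 by (simp add: Lev_def)
    then have "k = k'" using e2 by (simp add: prod_eq_iff)
    then show False using that by simp
  qed
  have one: "(\<Sum>p\<in>Fib k. R (fst p) (snd p) (0,0)) = 1" if k: "k \<in> K" for k
  proof -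
    have ks: "1 \<le> fst (fst k)" "1 \<le> snd (fst k)" "- (fst (fst k) + snd (fst k)) \<le> snd k" "snd k \<le> 0"
      using k by (auto simp: K_def S_def)
    have inj: "inj_on (h k) (Lev (0,0) (fst k) (- snd k))" by (rule inj_onI) (auto simp: h_def)
    have Rh: "R (fst (h k w)) (snd (h k w)) (0,0) = R (0,0) (fst k) w" for w
    proof -
      have "R (0,0) (fst k) w = R (tr w (fst (h k w))) (tr w (snd (h k w))) (tr w (0,0))"
        by (simp add: tr_def h_def)
      also have "\<dots> = R (fst (h k w)) (snd (h k w)) (0,0)" by (rule R_tr)
      finally show ?thesis by simp
    qed
    have "(\<Sum>p\<in>Fib k. R (fst p) (snd p) (0,0)) = (\<Sum>w\<in>Lev (0,0) (fst k) (- snd k). R (0,0) (fst k) w)"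
      unfolding Fib_def by (simp add: sum.reindex[OF inj] Rh)
    also have "\<dots> = 1" by (rule Lev_sum) (use ks in \<open>auto simp: d1_def\<close>)
    finally show ?thesis .
  qed
  have "(\<Sum>k\<in>K. \<Sum>p\<in>Fib k. R (fst p) (snd p) (0,0)) = (\<Sum>p\<in>(\<Union>k\<in>K. Fib k). R (fst p) (snd p) (0,0))"
    by (rule sum.UNION_disjoint[symmetric]) (use finK finF disj in auto)
  also have "\<dots> \<le> (\<Sum>p\<in>NEs ?B. R (fst p) (snd p) (0,0))"
    by (rule sum_mono2[OF NEs_finite]) (use sub in \<open>auto simp: R_nonneg\<close>)
  finally have a: "(\<Sum>k\<in>K. \<Sum>p\<in>Fib k. R (fst p) (snd p) (0,0)) \<le> (\<Sum>p\<in>NEs ?B. R (fst p) (snd p) (0,0))" .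
  have "(\<Sum>k\<in>K. \<Sum>p\<in>Fib k. R (fst p) (snd p) (0,0)) = real (card K)"
    using one by simp
  also have "card K = (\<Sum>d\<in>S. card {-(fst d + snd d)..0})" unfolding K_def
    by (rule card_SigmaI) (auto simp: S_def)
  also have "real (\<Sum>d\<in>S. card {-(fst d + snd d)..0}) = (\<Sum>d\<in>S. real_of_int (fst d + snd d + 1))"
    by (simp add: of_nat_sum) (rule sum.cong, auto simp: S_def)
  finally have b: "(\<Sum>k\<in>K. \<Sum>p\<in>Fib k. R (fst p) (snd p) (0,0)) = (\<Sum>d\<in>S. real_of_int (fst d + snd d + 1))" .
  show ?thesis using a b cube_count[of M] unfolding S_def by linarith
qed



lemma ratio_eq:
  assumes "u \<in> box L1 H1 L2 H2" "v \<in> box L1 H1 L2 H2"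
  shows "real (num_sp_through (box L1 H1 L2 H2) lattice_adj u v w) / real (num_sp (box L1 H1 L2 H2) lattice_adj u v)
     = R u v w"
  unfolding num_sp_through_def num_sp_def SP_eq[OF assms] R_def by simp

lemma demand_ordered:
  fixes L1 H1 L2 H2 :: int and B :: "(int\<times>int) set"
  defines "B \<equiv> box L1 H1 L2 H2"
  shows "2 * demand B lattice_adj w = (\<Sum>p\<in>{p \<in> B \<times> B. fst p \<noteq> snd p}. R (fst p) (snd p) w)"
proof -
  let ?P = "{p \<in> B \<times> B. fst p \<noteq> snd p}"
  let ?T = "{S. S \<subseteq> B \<and> card S = 2}"
  define g where "g S = (let u = (SOME u. u \<in> S); v = (SOME v. v \<in> S - {u})
       in real (num_sp_through B lattice_adj u v w) / real (num_sp B lattice_adj u v))" for S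
  have finB: "finite B" by (simp add: B_def box_finite)
  have finP: "finite ?P" by (rule finite_subset[of _ "B \<times> B"]) (auto simp: finB)
  have finT: "finite ?T" by (rule finite_subset[of _ "Pow B"]) (auto simp: finB)
  have gval: "g {a,b} = R a b w" if ab: "a \<in> B" "b \<in> B" "a \<noteq> b" for a b
  proof -
    let ?S = "{a,b}"
    define u where "u = (SOME u. u \<in> ?S)"
    define v where "v = (SOME v. v \<in> ?S - {u})"
    have u: "u \<in> ?S" unfolding u_def by (rule someI[of _ a]) simp
    have "?S - {u} \<noteq> {}" using ab by auto
    then obtain x where "x \<in> ?S - {u}" by blast
    then have v: "v \<in> ?S - {u}" unfolding v_def by (rule someI)
    have "g ?S = real (num_sp_through B lattice_adj u v w) / real (num_sp B lattice_adj u v)"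
      unfolding g_def u_def v_def Let_def by (rule refl)
    also have "\<dots> = R u v w" unfolding B_def by (rule ratio_eq) (use u v ab in \<open>auto simp: B_def\<close>)
    also have "\<dots> = R a b w"
    proof -
      have "(u = a \<and> v = b) \<or> (u = b \<and> v = a)" using u v by blast
      then show ?thesis using R_sym[of b a w] by blast
    qed
    finally show ?thesis .
  qed
  define f where "f p = {fst p, snd p}" for p :: "(int\<times>int)\<times>(int\<times>int)"
  have fimg: "f ` ?P \<subseteq> ?T"
  proof
    fix S assume "S \<in> f ` ?P"
    then obtain p where p: "p \<in> ?P" "S = f p" by blast
    then have "fst p \<noteq> snd p" "fst p \<in> B" "snd p \<in> B" by auto
    then have "f p \<subseteq> B" "card (f p) = 2" unfolding f_def by auto
    then show "S \<in> ?T" using p(2) by blast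
  qed
  have fib: "(\<Sum>p\<in>{p \<in> ?P. f p = S}. R (fst p) (snd p) w) = 2 * g S" if S: "S \<in> ?T" for S
  proof -
    from S have "card S = 2" by simp
    then obtain a b where ab: "S = {a,b}" "a \<noteq> b" unfolding card_2_iff by blast
    have abB: "a \<in> B" "b \<in> B" using S ab by auto
    have "{p \<in> ?P. f p = S} = {(a,b),(b,a)}" using ab abB by (auto simp: f_def doubleton_eq_iff)
    then have "(\<Sum>p\<in>{p \<in> ?P. f p = S}. R (fst p) (snd p) w) = R a b w + R b a w" using ab by simp
    also have "\<dots> = 2 * g S"
    proof -
      have "R b a w = R a b w" by (rule R_sym)
      moreover have "g S = R a b w" using gval[OF abB ab(2)] ab(1) by simp
      ultimately show ?thesis by simp
    qed
    finally show ?thesis .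
  qed
  have "(\<Sum>p\<in>?P. R (fst p) (snd p) w) = (\<Sum>S\<in>?T. \<Sum>p\<in>{p \<in> ?P. f p = S}. R (fst p) (snd p) w)"
    by (rule sum.group[OF finP finT fimg, symmetric])
  also have "\<dots> = (\<Sum>S\<in>?T. 2 * g S)" by (rule sum.cong[OF refl fib])
  also have "\<dots> = 2 * demand B lattice_adj w" by (simp add: demand_def g_def sum_distrib_left)
  finally show ?thesis by simp
qed



definition sw :: "(int\<times>int)\<times>(int\<times>int) \<Rightarrow> (int\<times>int)\<times>(int\<times>int)" where
  "sw p = (snd p, fst p)"
definition rf :: "(int\<times>int)\<times>(int\<times>int) \<Rightarrow> (int\<times>int)\<times>(int\<times>int)" where
  "rf p = (reflx (fst p), reflx (snd p))"

definition hR :: "(int\<times>int)\<times>(int\<times>int) \<Rightarrow> real" where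
  "hR p = R (fst p) (snd p) (0,0)"

lemma hR_sw: "hR (sw p) = hR p" by (simp add: hR_def sw_def R_sym)
lemma hR_rf: "hR (rf p) = hR p"
proof -
  have "R (reflx (fst p)) (reflx (snd p)) (reflx (0,0)) = R (fst p) (snd p) (0,0)" by (rule R_refl)
  then show ?thesis by (simp add: hR_def rf_def reflx_def)
qed
lemma hR_nonneg: "0 \<le> hR p" by (simp add: hR_def R_nonneg)

lemma img_le:
  assumes "\<And>p. hR (\<phi> p) = hR p" "finite A"
  shows "sum hR (\<phi> ` A) \<le> sum hR A"
proof -
  have "sum hR (\<phi> ` A) \<le> sum (hR \<circ> \<phi>) A" by (rule sum_image_le) (use assms hR_nonneg in auto)
  also have "\<dots> = sum hR A" using assms(1) by (simp add: comp_def)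
  finally show ?thesis .
qed

lemma img_eq:
  assumes "\<And>p. hR (\<phi> p) = hR p" "inj \<phi>"
  shows "sum hR (\<phi> ` A) = sum hR A"
  using assms by (simp add: sum.reindex inj_on_subset comp_def)

lemma inj_sw: "inj sw" by (rule injI) (auto simp: sw_def prod_eq_iff)
lemma inj_rf: "inj rf" by (rule injI) (auto simp: rf_def reflx_def prod_eq_iff)

lemma sum_Un_le_hR: "finite A \<Longrightarrow> finite B \<Longrightarrow> sum hR (A \<union> B) \<le> sum hR A + sum hR B"
  by (simp add: sum_Un sum_nonneg hR_nonneg)

lemma orient_upper:
  assumes L: "L \<le> 0" "0 \<le> H" and F: "nat (1 - L) \<le> F" "nat (1 + H) \<le> F"
  shows "sum hR {p \<in> box L H L H \<times> box L H L H. fst p \<noteq> snd p} \<le> 16 * real F ^ 3"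
proof -
  let ?B = "box L H L H" and ?B' = "box (- H) (- L) L H"
  let ?P = "{p \<in> ?B \<times> ?B. fst p \<noteq> snd p}"
  have f1: "finite (NE ?B)" "finite (NE ?B')" by (rule NE_finite)+
  have cov: "?P \<subseteq> NE ?B \<union> sw ` NE ?B \<union> rf ` NE ?B' \<union> sw ` rf ` NE ?B'"
  proof
    fix p assume p: "p \<in> ?P"
    obtain x1 y1 x2 y2 where pe: "p = ((x1,y1),(x2,y2))" by (metis prod.collapse)
    have inB: "L \<le> x1" "x1 \<le> H" "L \<le> y1" "y1 \<le> H" "L \<le> x2" "x2 \<le> H" "L \<le> y2" "y2 \<le> H"
      using p by (auto simp: pe box_def)
    consider "x1 \<le> x2 \<and> y1 \<le> y2" | "x2 \<le> x1 \<and> y2 \<le> y1" | "x2 \<le> x1 \<and> y1 \<le> y2" | "x1 \<le> x2 \<and> y2 \<le> y1"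
      by linarith
    then show "p \<in> NE ?B \<union> sw ` NE ?B \<union> rf ` NE ?B' \<union> sw ` rf ` NE ?B'"
    proof cases
      case 1 then have "p \<in> NE ?B" using inB by (simp add: pe NE_def box_def)
      then show ?thesis by blast
    next
      case 2 then have "((x2,y2),(x1,y1)) \<in> NE ?B" using inB by (simp add: NE_def box_def)
      moreover have "p = sw ((x2,y2),(x1,y1))" by (simp add: pe sw_def)
      ultimately show ?thesis by blast
    next
      case 3 then have "((-x1,y1),(-x2,y2)) \<in> NE ?B'" using inB by (simp add: NE_def box_def)
      moreover have "p = rf ((-x1,y1),(-x2,y2))" by (simp add: pe rf_def reflx_def)
      ultimately show ?thesis by blast
    next
      case 4 then have "((-x2,y2),(-x1,y1)) \<in> NE ?B'" using inB by (simp add: NE_def box_def)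
      moreover have "p = sw (rf ((-x2,y2),(-x1,y1)))" by (simp add: pe rf_def reflx_def sw_def)
      ultimately show ?thesis by blast
    qed
  qed
  have fin: "finite (NE ?B \<union> sw ` NE ?B \<union> rf ` NE ?B' \<union> sw ` rf ` NE ?B')" using f1 by simp
  have "sum hR ?P \<le> sum hR (NE ?B \<union> sw ` NE ?B \<union> rf ` NE ?B' \<union> sw ` rf ` NE ?B')"
    by (rule sum_mono2[OF fin cov hR_nonneg])
  also have "\<dots> \<le> sum hR (NE ?B) + sum hR (sw ` NE ?B) + sum hR (rf ` NE ?B') + sum hR (sw ` rf ` NE ?B')"
    using sum_Un_le_hR[of "NE ?B \<union> sw ` NE ?B \<union> rf ` NE ?B'" "sw ` rf ` NE ?B'"]
      sum_Un_le_hR[of "NE ?B \<union> sw ` NE ?B" "rf ` NE ?B'"] sum_Un_le_hR[of "NE ?B" "sw ` NE ?B"] f1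
    by simp
  also have "\<dots> \<le> sum hR (NE ?B) + sum hR (NE ?B) + sum hR (NE ?B') + sum hR (NE ?B')"
  proof -
    have a: "sum hR (sw ` NE ?B) \<le> sum hR (NE ?B)" by (rule img_le[OF hR_sw f1(1)])
    have b: "sum hR (rf ` NE ?B') \<le> sum hR (NE ?B')" by (rule img_le[OF hR_rf f1(2)])
    have c: "sum hR (sw ` rf ` NE ?B') \<le> sum hR (rf ` NE ?B')" by (rule img_le[OF hR_sw]) (use f1 in simp)
    show ?thesis using a b c by linarith
  qed
  also have "\<dots> \<le> 16 * real F ^ 3"
  proof -
    have a: "sum hR (NE ?B) \<le> 4 * real F ^ 3" unfolding hR_def by (rule NE_upper) (use L F in auto)
    have b: "sum hR (NE ?B') \<le> 4 * real F ^ 3" unfolding hR_def by (rule NE_upper) (use L F in auto)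
    show ?thesis using a b by linarith
  qed
  finally show ?thesis .
qed



lemma orient_lower:
  fixes M :: nat
  assumes M: "int M \<le> - L" "int M \<le> H"
  shows "4 * real M ^ 3 \<le> sum hR {p \<in> box L H L H \<times> box L H L H. fst p \<noteq> snd p}"
proof -
  let ?B = "box L H L H" and ?B' = "box (- H) (- L) L H"
  let ?P = "{p \<in> ?B \<times> ?B. fst p \<noteq> snd p}"
  have f1: "finite (NEs ?B)" "finite (NEs ?B')" by (rule NEs_finite)+
  let ?A1 = "NEs ?B" and ?A2 = "sw ` NEs ?B" and ?A3 = "rf ` NEs ?B'" and ?A4 = "sw ` rf ` NEs ?B'"
  have c1: "\<And>p. p \<in> ?A1 \<Longrightarrow> fst (fst p) < fst (snd p) \<and> snd (fst p) < snd (snd p)"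
    by (auto simp: NEs_def)
  have c2: "\<And>p. p \<in> ?A2 \<Longrightarrow> fst (fst p) > fst (snd p) \<and> snd (fst p) > snd (snd p)"
    by (auto simp: NEs_def sw_def)
  have c3: "\<And>p. p \<in> ?A3 \<Longrightarrow> fst (fst p) > fst (snd p) \<and> snd (fst p) < snd (snd p)"
    by (auto simp: NEs_def rf_def reflx_def)
  have c4: "\<And>p. p \<in> ?A4 \<Longrightarrow> fst (fst p) < fst (snd p) \<and> snd (fst p) > snd (snd p)"
    by (auto simp: NEs_def rf_def reflx_def sw_def)
  have sub: "?A1 \<union> ?A2 \<union> ?A3 \<union> ?A4 \<subseteq> ?P"
  proof -
    have "?A1 \<subseteq> ?P" by (auto simp: NEs_def)
    moreover have "?A2 \<subseteq> ?P" by (auto simp: NEs_def sw_def)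
    moreover have "?A3 \<subseteq> ?P" by (auto simp: NEs_def rf_def reflx_def box_def)
    moreover have "?A4 \<subseteq> ?P" by (auto simp: NEs_def rf_def reflx_def box_def sw_def)
    ultimately show ?thesis by blast
  qed
  have finP: "finite ?P" by (rule finite_subset[of _ "?B \<times> ?B"]) (auto simp: box_finite)
  have d12: "?A1 \<inter> ?A2 = {}"
  proof (rule equals0I)
    fix p assume "p \<in> ?A1 \<inter> ?A2"
    then have "p \<in> ?A1" "p \<in> ?A2" by blast+
    from c1[OF this(1)] c2[OF this(2)] show False by linarith
  qed
  have d3: "(?A1 \<union> ?A2) \<inter> ?A3 = {}"
  proof (rule equals0I)
    fix p assume "p \<in> (?A1 \<union> ?A2) \<inter> ?A3"
    then have "p \<in> ?A1 \<or> p \<in> ?A2" "p \<in> ?A3" by blast+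
    then show False using c1[of p] c2[of p] c3[of p] by linarith
  qed
  have d4: "(?A1 \<union> ?A2 \<union> ?A3) \<inter> ?A4 = {}"
  proof (rule equals0I)
    fix p assume "p \<in> (?A1 \<union> ?A2 \<union> ?A3) \<inter> ?A4"
    then have "p \<in> ?A1 \<or> p \<in> ?A2 \<or> p \<in> ?A3" "p \<in> ?A4" by blast+
    then show False using c1[of p] c2[of p] c3[of p] c4[of p] by linarith
  qed
  have fA: "finite ?A1" "finite ?A2" "finite ?A3" "finite ?A4" using f1 by auto
  have u1: "sum hR (?A1 \<union> ?A2) = sum hR ?A1 + sum hR ?A2" by (rule sum.union_disjoint[OF fA(1,2) d12])
  have u2: "sum hR (?A1 \<union> ?A2 \<union> ?A3) = sum hR (?A1 \<union> ?A2) + sum hR ?A3"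
    by (rule sum.union_disjoint[OF _ fA(3) d3]) (use fA in simp)
  have u3: "sum hR (?A1 \<union> ?A2 \<union> ?A3 \<union> ?A4) = sum hR (?A1 \<union> ?A2 \<union> ?A3) + sum hR ?A4"
    by (rule sum.union_disjoint[OF _ fA(4) d4]) (use fA in simp)
  have "sum hR (?A1 \<union> ?A2 \<union> ?A3 \<union> ?A4) = sum hR ?A1 + sum hR ?A2 + sum hR ?A3 + sum hR ?A4"
    using u1 u2 u3 by simp
  also have "\<dots> = sum hR ?A1 + sum hR ?A1 + sum hR (NEs ?B') + sum hR (NEs ?B')"
  proof -
    have a: "sum hR ?A2 = sum hR ?A1" by (rule img_eq[OF hR_sw inj_sw])
    have b: "sum hR ?A3 = sum hR (NEs ?B')" by (rule img_eq[OF hR_rf inj_rf])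
    have c: "sum hR ?A4 = sum hR ?A3" by (rule img_eq[OF hR_sw inj_sw])
    show ?thesis using a b c by simp
  qed
  finally have e: "sum hR (?A1 \<union> ?A2 \<union> ?A3 \<union> ?A4) = 2 * sum hR (NEs ?B) + 2 * sum hR (NEs ?B')" by simp
  have l1: "real M ^ 3 \<le> sum hR (NEs ?B)" unfolding hR_def by (rule NE_lower) (use M in auto)
  have l2: "real M ^ 3 \<le> sum hR (NEs ?B')" unfolding hR_def by (rule NE_lower) (use M in auto)
  have "sum hR (?A1 \<union> ?A2 \<union> ?A3 \<union> ?A4) \<le> sum hR ?P"
    by (rule sum_mono2[OF finP sub hR_nonneg])
  then show ?thesis using e l1 l2 by linarith
qed



lemma bv:
  fixes m :: nat
  assumes m1: "1 \<le> m"
  shows "box_vertices (m^2) = box (- int ((m - 1) div 2)) (int (m div 2)) (- int ((m - 1) div 2)) (int (m div 2))"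
proof -
  have s: "sqrt (real (m^2)) = real m" by simp
  have a: "(- real m < 2 * real_of_int x) \<longleftrightarrow> (- int ((m - 1) div 2) \<le> x)" for x :: int
  proof -
    have "(- real m < 2 * real_of_int x) \<longleftrightarrow> (real_of_int (- int m) < real_of_int (2 * x))" by simp
    also have "\<dots> \<longleftrightarrow> (- int m < 2 * x)" by (rule of_int_less_iff)
    also have "\<dots> \<longleftrightarrow> (- int ((m - 1) div 2) \<le> x)" using m1 by presburger
    finally show ?thesis .
  qed
  have b: "(2 * real_of_int x \<le> real m) \<longleftrightarrow> (x \<le> int (m div 2))" for x :: int
  proof -
    have "(2 * real_of_int x \<le> real m) \<longleftrightarrow> (real_of_int (2 * x) \<le> real_of_int (int m))" by simp
    also have "\<dots> \<longleftrightarrow> (2 * x \<le> int m)" by (rule of_int_le_iff)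
    also have "\<dots> \<longleftrightarrow> (x \<le> int (m div 2))" by presburger
    finally show ?thesis .
  qed
  show ?thesis unfolding box_vertices_def box_def s using a b by auto
qed

lemma n_powr: "real (m^2) powr 1.5 = real m ^ 3"
proof -
  have e: "real (m^2) = real m powr 2" by simp
  have "real (m^2) powr 1.5 = (real m powr 2) powr 1.5" by (simp only: e)
  also have "\<dots> = real m powr (2 * 1.5)" by (rule powr_powr)
  also have "(2 * 1.5 :: real) = 3" by simp
  finally show ?thesis by simp
qed

lemma demand_bounds:
  fixes m :: nat
  assumes m: "2 \<le> m"
  shows "(real m - 2) ^ 3 / 4 \<le> demand (box_vertices (m^2)) lattice_adj (0,0)"
    "demand (box_vertices (m^2)) lattice_adj (0,0) \<le> (real m + 2) ^ 3"
proof -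
  define L where "L = - int ((m - 1) div 2)"
  define H where "H = int (m div 2)"
  have BV: "box_vertices (m^2) = box L H L H" unfolding L_def H_def by (rule bv) (use m in simp)
  let ?P = "{p \<in> box L H L H \<times> box L H L H. fst p \<noteq> snd p}"
  have D: "2 * demand (box_vertices (m^2)) lattice_adj (0,0) = sum hR ?P"
    unfolding BV demand_ordered hR_def by simp
  define F where "F = m div 2 + 1"
  have F1: "nat (1 - L) \<le> F" unfolding L_def F_def by simp
  have F2: "nat (1 + H) \<le> F" unfolding H_def F_def by simp
  have up: "sum hR ?P \<le> 16 * real F ^ 3"
    by (rule orient_upper) (use F1 F2 in \<open>auto simp: L_def H_def\<close>)
  define M where "M = (m - 1) div 2"
  have lo: "4 * real M ^ 3 \<le> sum hR ?P"
    by (rule orient_lower) (auto simp: M_def L_def H_def)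
  have Fb: "real F \<le> (real m + 2) / 2"
  proof -
    have "2 * (m div 2) \<le> m" by simp
    then have "2 * real (m div 2) \<le> real m" by (metis of_nat_le_iff of_nat_mult of_nat_numeral)
    then show ?thesis unfolding F_def by simp
  qed
  have Mb: "(real m - 2) / 2 \<le> real M"
  proof -
    have "m \<le> 2 * ((m - 1) div 2) + 2" using m by linarith
    then have "real m \<le> 2 * real M + 2" unfolding M_def by (metis of_nat_le_iff of_nat_mult of_nat_numeral of_nat_add)
    then show ?thesis by simp
  qed
  have "real F ^ 3 \<le> ((real m + 2) / 2) ^ 3" by (rule power_mono[OF Fb]) simp
  then show "demand (box_vertices (m^2)) lattice_adj (0,0) \<le> (real m + 2) ^ 3"
    using D up by (simp add: power_divide)
  have "((real m - 2) / 2) ^ 3 \<le> real M ^ 3" by (rule power_mono[OF Mb]) (use m in simp)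
  then show "(real m - 2) ^ 3 / 4 \<le> demand (box_vertices (m^2)) lattice_adj (0,0)"
    using D lo by (simp add: power_divide)
qed



lemma key:
  fixes m :: nat and \<epsilon> :: real
  assumes e: "0 < \<epsilon>" and m100: "100 \<le> m" and me: "3 / \<epsilon> \<le> real m"
  shows "(1/4 - \<epsilon>) * real (m^2) powr 1.5 < demand (box_vertices (m^2)) lattice_adj (0, 0) \<and>
     demand (box_vertices (m^2)) lattice_adj (0, 0) < (9/8 + \<epsilon>) * real (m^2) powr 1.5"
proof -
  define x where "x = real m"
  have x100: "100 \<le> x" using m100 unfolding x_def by simp
  have ex: "3 \<le> \<epsilon> * x" using me e unfolding x_def by (simp add: field_simps)
  have db: "(x - 2) ^ 3 / 4 \<le> demand (box_vertices (m^2)) lattice_adj (0,0)"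
    "demand (box_vertices (m^2)) lattice_adj (0,0) \<le> (x + 2) ^ 3"
    using demand_bounds[of m] m100 unfolding x_def by auto
  have P: "real (m^2) powr 1.5 = x ^ 3" unfolding x_def by (rule n_powr)
  have c1: "(x - 2) ^ 3 = x^3 - 6 * x^2 + 12 * x - 8" by (simp add: power3_eq_cube power2_eq_square algebra_simps)
  have c2: "(x + 2) ^ 3 = x^3 + 6 * x^2 + 12 * x + 8" by (simp add: power3_eq_cube power2_eq_square algebra_simps)
  have x3: "x^3 = x * x^2" by (simp add: power3_eq_cube power2_eq_square)
  have x2: "x^2 = x * x" by (simp add: power2_eq_square)
  have sq0: "0 \<le> x^2" by simp
  have h1: "\<epsilon> * x^3 \<ge> 3 * x^2"
  proof -
    have "3 * x^2 \<le> (\<epsilon> * x) * x^2" by (rule mult_right_mono[OF ex sq0])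
    then show ?thesis using x3 by (simp add: algebra_simps)
  qed
  have h2: "x^3 \<ge> 100 * x^2"
  proof -
    have "100 * x^2 \<le> x * x^2" by (rule mult_right_mono[OF x100 sq0])
    then show ?thesis using x3 by simp
  qed
  have h3: "x^2 \<ge> 100 * x"
  proof -
    have "100 * x \<le> x * x" by (rule mult_right_mono[OF x100]) (use x100 in simp)
    then show ?thesis using x2 by simp
  qed
  have h4: "0 \<le> \<epsilon> * x^3" using e x100 by simp
  have lo: "(1/4 - \<epsilon>) * x^3 < (x - 2) ^ 3 / 4" unfolding c1 using h1 h2 h3 x100 by (simp add: algebra_simps)
  have up: "(x + 2) ^ 3 < (9/8 + \<epsilon>) * x^3" unfolding c2 using h2 h3 h4 x100 by (simp add: algebra_simps)
  show ?thesis unfolding P using lo up db by linarith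
qed

theorem mainTheorem13:
  shows "\<forall>\<epsilon>>0. \<forall>\<^sub>F n in sequentially. (\<exists>m::nat. n = m\<^sup>2) \<longrightarrow>
     (1/4 - \<epsilon>) * real n powr 1.5 < demand (box_vertices n) lattice_adj (0, 0) \<and>
     demand (box_vertices n) lattice_adj (0, 0) < (9/8 + \<epsilon>) * real n powr 1.5"
proof (intro allI impI)
  fix \<epsilon> :: real assume e: "0 < \<epsilon>"
  define K where "K = nat \<lceil>3 / \<epsilon>\<rceil> + 100"
  have K1: "3 / \<epsilon> \<le> real K" unfolding K_def by linarith
  have K2: "100 \<le> K" unfolding K_def by simp
  show "\<forall>\<^sub>F n in sequentially. (\<exists>m::nat. n = m\<^sup>2) \<longrightarrow>
     (1/4 - \<epsilon>) * real n powr 1.5 < demand (box_vertices n) lattice_adj (0, 0) \<and>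
     demand (box_vertices n) lattice_adj (0, 0) < (9/8 + \<epsilon>) * real n powr 1.5"
  proof (rule eventually_sequentiallyI[of "K^2"], intro impI)
    fix n assume n: "K^2 \<le> n" and "\<exists>m::nat. n = m\<^sup>2"
    then obtain m :: nat where nm: "n = m^2" by blast
    have "K \<le> m"
    proof (rule ccontr)
      assume "\<not> K \<le> m"
      then have "m < K" by simp
      then have "m^2 < K^2" by (simp add: power_strict_mono)
      then show False using n nm by simp
    qed
    then have "100 \<le> m" "3 / \<epsilon> \<le> real m" using K1 K2 by auto
    then show "(1/4 - \<epsilon>) * real n powr 1.5 < demand (box_vertices n) lattice_adj (0, 0) \<and>
     demand (box_vertices n) lattice_adj (0, 0) < (9/8 + \<epsilon>) * real n powr 1.5"
      unfolding nm using key[OF e] by blast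
  qed
qed


end
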